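(* For every positive integer $n$, $|\mathrm{Sort}_n(\mathrm{SC}_{3\underline{21}})|=2^{n-1}$.
   Context: $\mathfrak S_n$ is the set of permutations of $\{1,\dots,n\}$. A vincular pattern is a permutation with some entries underlined; a sequence contains it if it has a subsequence with the same relative order in which entries corresponding to adjacent underlined entries occupy consecutive positions. An occurrence of $3\underline{21}$ is $a_i a_j a_{j+1}$ with $i<j$ and $a_{j+1}<a_j<a_i$. For a pattern $\sigma$, the map $\mathrm{SC}_\sigma$ acts on $\tau$: read entries left to right; when the next entry $x$ is read, if pushing $x$ yields a stack whose entries read top to bottom (stack adjacency = consecutive positions) avoid $\sigma$, push $x$; otherwise pop the top stack entry to the output and repeat. At the end pop all remaining entries; the output is $\mathrm{SC}_\sigma(\tau)$. West's stack-sorting map is $s=\mathrm{SC}_{21}$. $\mathrm{Sort}_n(\mathrm{SC}_\sigma)=\{\tau\in\mathfrak S_n : s(\mathrm{SC}_\sigma(\tau))=12\cdots n\}$. *)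

theory Defs
  imports "HOL-Combinatorics.Multiset_Permutations"
begin

text \<open>A vincular pattern is a pair (p, U): p is the pattern as a list of numbers,
  and U is the set of (0-based) indices i such that entries i and i+1 of the pattern
  are adjacent underlined entries, i.e. must occupy consecutive positions.\<close>

type_synonym vpattern = "nat list \<times> nat set"

definition contains_vpat :: "nat list \<Rightarrow> vpattern \<Rightarrow> bool" where
  "contains_vpat w P \<longleftrightarrow>
     (\<exists>idx :: nat list.
        length idx = length (fst P) \<and>
        sorted_wrt (<) idx \<and>
        (\<forall>i\<in>set idx. i < length w) \<and>
        (\<forall>i<length idx. \<forall>j<length idx.
            (w ! (idx ! i) < w ! (idx ! j)) \<longleftrightarrow> (fst P ! i < fst P ! j)) \<and>
        (\<forall>i\<in>snd P. Suc i < length idx \<longrightarrow> idx ! Suc i = Suc (idx ! i)))"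

definition avoids_vpat :: "nat list \<Rightarrow> vpattern \<Rightarrow> bool" where
  "avoids_vpat w P \<longleftrightarrow> \<not> contains_vpat w P"

text \<open>The stack is a list whose head is the top,
  so the list itself reads the stack from top to bottom. If the stack is empty the entry is pushed (a one-entry stack avoids
  every pattern of length at least 2).\<close>

function sc_aux :: "vpattern \<Rightarrow> nat list \<Rightarrow> nat list \<Rightarrow> nat list" where
  "sc_aux P [] st = st"
| "sc_aux P (x # xs) st =
     (if avoids_vpat (x # st) P then sc_aux P xs (x # st)
      else (case st of [] \<Rightarrow> sc_aux P xs [x]
                     | y # st' \<Rightarrow> y # sc_aux P (x # xs) st'))"
  by pat_completeness auto
termination
  by (relation "measure (\<lambda>(P, xs, st). 2 * length xs + length st)") auto

definition SC :: "vpattern \<Rightarrow> nat list \<Rightarrow> nat list" where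
  "SC P \<tau> = sc_aux P \<tau> []"

definition west_s :: "nat list \<Rightarrow> nat list" where
  "west_s = SC ([2, 1], {})"

definition pat_3_21 :: vpattern where
  "pat_3_21 = ([3, 2, 1], {1})"

definition Sort_n :: "nat \<Rightarrow> vpattern \<Rightarrow> nat list set" where
  "Sort_n n P = {\<tau> \<in> permutations_of_set {1..n}. west_s (SC P \<tau>) = [1..<n+1]}"

end

theory Submission imports Defs begin

definition c321 :: "nat list \<Rightarrow> bool" where
  "c321 w \<longleftrightarrow> (\<exists>u a v b c z. w = u @ a # v @ b # c # z \<and> c < b \<and> b < a)"

lemma c321_idx: "c321 w \<longleftrightarrow> (\<exists>i j. i < j \<and> Suc j < length w \<and> w!(Suc j) < w!j \<and> w!j < w!i)"
proof
  assume "c321 w"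
  then obtain u a v b c z where w: "w = u @ a # v @ b # c # z" "c < b" "b < a" unfolding c321_def by blast
  show "\<exists>i j. i < j \<and> Suc j < length w \<and> w!(Suc j) < w!j \<and> w!j < w!i"
    apply (rule exI[of _ "length u"], rule exI[of _ "length u + 1 + length v"])
    using w by (simp add: nth_append)
next
  assume "\<exists>i j. i < j \<and> Suc j < length w \<and> w!(Suc j) < w!j \<and> w!j < w!i"
  then obtain i j where ij: "i < j" "Suc j < length w" "w!(Suc j) < w!j" "w!j < w!i" by blast
  have e1: "w = take i w @ drop i w" by simp
  have e2: "drop i w = w!i # drop (Suc i) w" using ij by (simp add: Cons_nth_drop_Suc)
  have e3: "drop (Suc i) w = take (j - Suc i) (drop (Suc i) w) @ drop j w"
    using ij by (metis Suc_leI append_take_drop_id drop_drop le_add_diff_inverse2)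
  have e4: "drop j w = w!j # w!(Suc j) # drop (Suc (Suc j)) w" using ij
    by (metis Cons_nth_drop_Suc Suc_lessD)
  have "w = take i w @ w!i # take (j - Suc i) (drop (Suc i) w) @ w!j # w!(Suc j) # drop (Suc (Suc j)) w"
    using e1 e2 e3 e4 by simp
  then show "c321 w" unfolding c321_def using ij by blast
qed

lemma contains321: "contains_vpat w pat_3_21 \<longleftrightarrow> c321 w"
proof
  assume "contains_vpat w pat_3_21"
  then obtain idx where H: "length idx = length (fst pat_3_21) \<and>
        sorted_wrt (<) idx \<and>
        (\<forall>i\<in>set idx. i < length w) \<and>
        (\<forall>i<length idx. \<forall>j<length idx.
            (w ! (idx ! i) < w ! (idx ! j)) \<longleftrightarrow> (fst pat_3_21 ! i < fst pat_3_21 ! j)) \<and>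
        (\<forall>i\<in>snd pat_3_21. Suc i < length idx \<longrightarrow> idx ! Suc i = Suc (idx ! i))"
    unfolding contains_vpat_def by (rule exE)
  have L: "length idx = 3" and S: "sorted_wrt (<) idx" and R: "\<forall>i\<in>set idx. i < length w"
    and O: "\<forall>i<length idx. \<forall>j<length idx. (w ! (idx ! i) < w ! (idx ! j)) \<longleftrightarrow> ([3,2,1::nat] ! i < [3,2,1::nat] ! j)"
    and A: "Suc 1 < length idx \<longrightarrow> idx ! Suc 1 = Suc (idx ! 1)"
    using H unfolding pat_3_21_def fst_conv snd_conv
    apply -
    apply (elim conjE, simp)
    apply (elim conjE, assumption)
    apply (elim conjE, assumption)
    apply (elim conjE, assumption)
    apply (elim conjE, simp)
    done
  obtain i0 i1 i2 where idx: "idx = [i0,i1,i2]" using L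
    by (auto simp: length_Suc_conv numeral_3_eq_3)
  have "i0 < i1" "i2 = Suc i1" "i2 < length w" using S A R idx by auto
  moreover have "w!i1 < w!i0" using O[rule_format, of 1 0] idx by simp
  moreover have "w!i2 < w!i1" using O[rule_format, of 2 1] idx by simp
  ultimately show "c321 w" unfolding c321_idx by auto
next
  assume "c321 w"
  then obtain i j where ij: "i < j" "Suc j < length w" "w!(Suc j) < w!j" "w!j < w!i"
    unfolding c321_idx by blast
  show "contains_vpat w pat_3_21"
  proof -
    have O: "(w!([i,j,Suc j]!a) < w!([i,j,Suc j]!b)) \<longleftrightarrow> ([3,2,1::nat]!a < [3,2,1::nat]!b)"
      if "a < 3" "b < 3" for a b
    proof -
      have "a = 0 \<or> a = Suc 0 \<or> a = Suc (Suc 0)" "b = 0 \<or> b = Suc 0 \<or> b = Suc (Suc 0)" using that by auto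
      then show ?thesis using ij by (elim disjE) simp_all
    qed
    show ?thesis unfolding contains_vpat_def pat_3_21_def fst_conv snd_conv
      apply (rule exI[of _ "[i,j,Suc j]"])
      using ij O by simp
  qed
qed

lemma contains21: "contains_vpat w ([2,1],{}) \<longleftrightarrow> \<not> sorted w"
proof
  assume "contains_vpat w ([2,1],{})"
  then obtain idx where H: "length idx = length (fst ([2,1::nat],{}::nat set)) \<and>
        sorted_wrt (<) idx \<and>
        (\<forall>i\<in>set idx. i < length w) \<and>
        (\<forall>i<length idx. \<forall>j<length idx.
            (w ! (idx ! i) < w ! (idx ! j)) \<longleftrightarrow> (fst ([2,1::nat],{}::nat set) ! i < fst ([2,1::nat],{}::nat set) ! j)) \<and>
        (\<forall>i\<in>snd ([2,1::nat],{}::nat set). Suc i < length idx \<longrightarrow> idx ! Suc i = Suc (idx ! i))"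
    unfolding contains_vpat_def by (rule exE)
  have L: "length idx = 2" and S: "sorted_wrt (<) idx" and R: "\<forall>i\<in>set idx. i < length w"
    and O: "\<forall>i<length idx. \<forall>j<length idx. (w ! (idx ! i) < w ! (idx ! j)) \<longleftrightarrow> ([2,1::nat] ! i < [2,1::nat] ! j)"
    using H by simp_all
  obtain i0 i1 where idx: "idx = [i0,i1]" using L
    by (auto simp: length_Suc_conv numeral_2_eq_2)
  have "i0 < i1" "i1 < length w" using S R idx by auto
  moreover have "w!i1 < w!i0" using O[rule_format, of 1 0] idx by simp
  ultimately show "\<not> sorted w" unfolding sorted_iff_nth_mono_less by (meson not_le)
next
  assume "\<not> sorted w"
  then obtain i j where ij: "i < j" "j < length w" "w!j < w!i"
    unfolding sorted_iff_nth_mono_less by (meson not_le)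
  show "contains_vpat w ([2,1],{})"
  proof -
    have O: "(w!([i,j]!a) < w!([i,j]!b)) \<longleftrightarrow> ([2,1::nat]!a < [2,1::nat]!b)"
      if "a < 2" "b < 2" for a b
    proof -
      have "a = 0 \<or> a = Suc 0" "b = 0 \<or> b = Suc 0" using that by auto
      then show ?thesis using ij by (elim disjE) simp_all
    qed
    show ?thesis unfolding contains_vpat_def fst_conv snd_conv
      apply (rule exI[of _ "[i,j]"])
      using ij O by simp
  qed
qed


abbreviation P21 :: vpattern where "P21 \<equiv> ([2,1],{})"

lemma avoids21: "avoids_vpat w P21 \<longleftrightarrow> sorted w"
  unfolding avoids_vpat_def using contains21 by blast

lemma avoids321: "avoids_vpat w pat_3_21 \<longleftrightarrow> \<not> c321 w"
  unfolding avoids_vpat_def using contains321 by blast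

lemma sc_mset: "mset (sc_aux P xs st) = mset xs + mset st"
  by (induction P xs st rule: sc_aux.induct) (auto split: list.splits)

lemma sc_set: "set (sc_aux P xs st) = set xs \<union> set st"
  using sc_mset by (metis set_mset_mset set_mset_union)

lemma sc_D: "\<exists>ou st1. sc_aux P (L @ ys) st = ou @ sc_aux P ys st1 \<and> sc_aux P L st = ou @ st1"
proof (induction P L st rule: sc_aux.induct)
  case (1 P st)
  then show ?case by (rule_tac x="[]" in exI, rule_tac x=st in exI) simp
next
  case (2 P x xs st)
  show ?case
  proof (cases "avoids_vpat (x # st) P")
    case True
    then show ?thesis using 2(1) by simp
  next
    case False
    show ?thesis
    proof (cases st)
      case Nil
      then show ?thesis using 2(2) False by simp
    next
      case (Cons y st')
      obtain ou st1 where "sc_aux P ((x # xs) @ ys) st' = ou @ sc_aux P ys st1 \<and> sc_aux P (x # xs) st' = ou @ st1"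
        using 2(3)[OF False Cons] by blast
      then show ?thesis using False Cons
        by (rule_tac x="y # ou" in exI, rule_tac x=st1 in exI) simp
    qed
  qed
qed

definition p2 :: "nat list \<Rightarrow> nat \<Rightarrow> nat \<Rightarrow> bool" where
  "p2 w a b \<longleftrightarrow> (\<exists>A B C. w = A @ a # B @ b # C)"

definition p3 :: "nat list \<Rightarrow> nat \<Rightarrow> nat \<Rightarrow> nat \<Rightarrow> bool" where
  "p3 w a b c \<longleftrightarrow> (\<exists>A B C D. w = A @ a # B @ b # C @ c # D)"

lemma p2_sc: "p2 st a b \<Longrightarrow> p2 (sc_aux P ys st) a b"
proof (induction P ys st rule: sc_aux.induct)
  case (1 P st)
  then show ?case by simp
next
  case (2 P x xs st)
  show ?case
  proof (cases "avoids_vpat (x # st) P")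
    case True
    have "p2 (x # st) a b" using 2(4) unfolding p2_def
      by (metis append_Cons)
    then show ?thesis using 2(1)[OF True] True by simp
  next
    case False
    show ?thesis
    proof (cases st)
      case Nil
      then show ?thesis using 2(4) by (simp add: p2_def)
    next
      case (Cons y st')
      from 2(4) obtain A B C where st: "st = A @ a # B @ b # C" unfolding p2_def by blast
      show ?thesis
      proof (cases A)
        case Nil
        then have "y = a" "st' = B @ b # C" using st Cons by auto
        then have "b \<in> set (sc_aux P (x # xs) st')" using sc_set[of P "x # xs" st'] by (auto simp del: sc_aux.simps)
        then obtain B' C' where "sc_aux P (x # xs) st' = B' @ b # C'" by (meson split_list)
        then show ?thesis using False Cons \<open>y = a\<close> unfolding p2_def
          by (rule_tac x="[]" in exI, rule_tac x=B' in exI, rule_tac x=C' in exI) simp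
      next
        case (Cons z A')
        then have "p2 st' a b" using st \<open>st = y # st'\<close> unfolding p2_def by auto
        then have "p2 (sc_aux P (x # xs) st') a b" using 2(3)[OF False \<open>st = y # st'\<close>] by blast
        then show ?thesis using False \<open>st = y # st'\<close> unfolding p2_def
          by (metis append_Cons sc_aux.simps(2) list.case(2))
      qed
    qed
  qed
qed


lemma W_bot: "P = P21 \<Longrightarrow> (\<forall>y\<in>set ys \<union> set st. y < m) \<Longrightarrow> sc_aux P ys (st @ [m]) = sc_aux P ys st @ [m]"
proof (induction P ys st rule: sc_aux.induct)
  case (1 P st)
  then show ?case by simp
next
  case (2 P x xs st)
  have eq: "sorted (x # st @ [m]) \<longleftrightarrow> sorted (x # st)"
    using 2(5) by (auto simp: sorted_append less_imp_le)
  show ?case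
  proof (cases "sorted (x # st)")
    case True
    then have a: "avoids_vpat (x # st) P" "avoids_vpat (x # st @ [m]) P" using avoids21 2(4) eq by auto
    have b: "\<forall>y\<in>set xs \<union> set (x # st). y < m" using 2(5) by auto
    show ?thesis using 2(1)[OF a(1) 2(4) b] a by simp
  next
    case False
    then obtain y st' where st: "st = y # st'" by (cases st) auto
    have a: "\<not> avoids_vpat (x # st) P" "\<not> avoids_vpat (x # st @ [m]) P" using avoids21 2(4) eq False by auto
    have b: "\<forall>y\<in>set (x # xs) \<union> set st'. y < m" using 2(5) st by auto
    show ?thesis using 2(3)[OF a(1) st 2(4) b] a st by simp
  qed
qed

lemma W_popall: "\<forall>y\<in>set st. y < m \<Longrightarrow> sc_aux P21 (m # R) st = st @ sc_aux P21 (m # R) []"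
proof (induction st)
  case Nil
  then show ?case by simp
next
  case (Cons y st)
  have "\<not> avoids_vpat (m # y # st) P21" using avoids21 Cons.prems by auto
  then show ?case using Cons by simp
qed

lemma W_split:
  assumes "\<forall>y\<in>set L \<union> set R. y < m"
  shows "west_s (L @ m # R) = west_s L @ west_s R @ [m]"
proof -
  obtain ou st1 where D: "sc_aux P21 (L @ m # R) [] = ou @ sc_aux P21 (m # R) st1"
    "sc_aux P21 L [] = ou @ st1" using sc_D by blast
  have "set st1 \<subseteq> set L" using sc_set[of P21 L "[]"] D(2) by auto
  then have "sc_aux P21 (m # R) st1 = st1 @ sc_aux P21 (m # R) []"
    using assms W_popall by blast
  moreover have "sc_aux P21 (m # R) [] = sc_aux P21 R [m]"
    using avoids21[of "[m]"] by simp
  moreover have "sc_aux P21 R ([] @ [m]) = sc_aux P21 R [] @ [m]"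
    using W_bot[of P21 R "[]" m] assms by simp
  ultimately show ?thesis using D unfolding west_s_def SC_def by simp
qed

definition has231 :: "nat list \<Rightarrow> bool" where
  "has231 w \<longleftrightarrow> (\<exists>p x d. p3 w p x d \<and> d < p \<and> p < x)"

lemma p3_append_left: "p3 w a b c \<Longrightarrow> p3 (u @ w) a b c"
  unfolding p3_def by (metis append.assoc)

lemma p3_append_right: "p3 w a b c \<Longrightarrow> p3 (w @ u) a b c"
proof -
  assume "p3 w a b c"
  then obtain A B C D where "w = A @ a # B @ b # C @ c # D" unfolding p3_def by blast
  then show ?thesis unfolding p3_def by (rule_tac x=A in exI, rule_tac x=B in exI, rule_tac x=C in exI, rule_tac x="D @ u" in exI) simp
qed

lemma W_sort: "distinct \<pi> \<Longrightarrow> \<not> has231 \<pi> \<Longrightarrow> sorted (west_s \<pi>)"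
proof (induction "length \<pi>" arbitrary: \<pi> rule: less_induct)
  case less
  show ?case
  proof (cases "\<pi> = []")
    case True
    then show ?thesis by (simp add: west_s_def SC_def)
  next
    case False
    define m where "m = Max (set \<pi>)"
    have "m \<in> set \<pi>" using False m_def by simp
    then obtain L R where pi: "\<pi> = L @ m # R" by (meson split_list)
    have lt: "\<forall>y\<in>set L \<union> set R. y < m"
    proof
      fix y assume y: "y \<in> set L \<union> set R"
      then have "y \<in> set \<pi>" using pi by auto
      then have "y \<le> m" using m_def by simp
      moreover have "y \<noteq> m" using y less.prems(1) pi by auto
      ultimately show "y < m" by simp
    qed
    have LR: "l < r" if lL: "l \<in> set L" and rR: "r \<in> set R" for l r
    proof (rule ccontr)
      assume "\<not> l < r"
      moreover have "l \<noteq> r" using lL rR less.prems(1) pi by auto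
      ultimately have "r < l" by simp
      moreover obtain A B where "L = A @ l # B" using lL by (meson split_list)
      moreover obtain C D where "R = C @ r # D" using rR by (meson split_list)
      ultimately have "has231 \<pi>" unfolding has231_def p3_def using pi lt lL rR
        by (rule_tac x=l in exI, rule_tac x=m in exI, rule_tac x=r in exI) auto
      then show False using less.prems(2) by blast
    qed
    have hL: "\<not> has231 L" using less.prems(2) pi unfolding has231_def
      using p3_append_right by fastforce
    have hR: "\<not> has231 R" using less.prems(2) pi unfolding has231_def
      using p3_append_left by (metis append_Cons append_Nil)
    have sL: "sorted (west_s L)" using less.hyps[of L] pi less.prems(1) hL by simp
    have sR: "sorted (west_s R)" using less.hyps[of R] pi less.prems(1) hR by simp
    have setL: "set (west_s L) = set L" using sc_set[of P21 L "[]"] unfolding west_s_def SC_def by simp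
    have setR: "set (west_s R) = set R" using sc_set[of P21 R "[]"] unfolding west_s_def SC_def by simp
    have "sorted (west_s L @ west_s R @ [m])"
      using sL sR setL setR LR lt by (auto simp: sorted_append less_imp_le)
    then show ?thesis using W_split[OF lt] pi by simp
  qed
qed

lemma W_a: "p \<in> set st \<Longrightarrow> p < x \<Longrightarrow> \<exists>u st2. sc_aux P21 (x # ys) st = u @ p # sc_aux P21 (x # ys) st2"
proof (induction st)
  case Nil
  then show ?case by simp
next
  case (Cons y st')
  have "\<not> sorted (x # y # st')"
  proof
    assume "sorted (x # y # st')"
    then have "\<forall>z\<in>set (y # st'). x \<le> z" by simp
    then have "x \<le> p" using Cons.prems(1) by blast
    then show False using Cons.prems(2) by simp
  qed
  then have na: "\<not> avoids_vpat (x # y # st') P21" using avoids21 by blast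
  have pop: "sc_aux P21 (x # ys) (y # st') = y # sc_aux P21 (x # ys) st'"
    using na by (subst sc_aux.simps(2)) (simp del: sc_aux.simps)
  show ?case
  proof (cases "y = p")
    case True
    then show ?thesis using pop by (rule_tac x="[]" in exI, rule_tac x=st' in exI) simp
  next
    case False
    then obtain u st2 where "sc_aux P21 (x # ys) st' = u @ p # sc_aux P21 (x # ys) st2"
      using Cons by auto
    then show ?thesis using pop by (rule_tac x="y # u" in exI, rule_tac x=st2 in exI) simp
  qed
qed

lemma W_b: "p \<in> set st \<Longrightarrow> p < x \<Longrightarrow> d \<in> set ys2 \<Longrightarrow>
   \<exists>u v. sc_aux P21 (ys1 @ x # ys2) st = u @ p # v \<and> d \<in> set v"
proof (induction ys1 arbitrary: st)
  case Nil
  obtain u st2 where e: "sc_aux P21 (x # ys2) st = u @ p # sc_aux P21 (x # ys2) st2"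
    using W_a[OF Nil(1,2)] by blast
  have "d \<in> set (sc_aux P21 (x # ys2) st2)" using sc_set[of P21 "x # ys2" st2] Nil(3)
    by (auto simp del: sc_aux.simps)
  then show ?case using e by (simp del: sc_aux.simps) blast
next
  case (Cons y ys1)
  obtain ou st1 where D: "sc_aux P21 ([y] @ (ys1 @ x # ys2)) st = ou @ sc_aux P21 (ys1 @ x # ys2) st1"
    "sc_aux P21 [y] st = ou @ st1" using sc_D by blast
  have "p \<in> set ou \<or> p \<in> set st1" using sc_set[of P21 "[y]" st] D(2) Cons.prems(1) by auto
  then show ?case
  proof
    assume "p \<in> set ou"
    then obtain u1 u2 where "ou = u1 @ p # u2" by (meson split_list)
    moreover have "d \<in> set (sc_aux P21 (ys1 @ x # ys2) st1)" using sc_set Cons.prems(3) by auto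
    ultimately show ?thesis using D(1) by (rule_tac x=u1 in exI, rule_tac x="u2 @ sc_aux P21 (ys1 @ x # ys2) st1" in exI) simp
  next
    assume "p \<in> set st1"
    then obtain u v where "sc_aux P21 (ys1 @ x # ys2) st1 = u @ p # v \<and> d \<in> set v"
      using Cons.IH Cons.prems by blast
    then show ?thesis using D(1) by (rule_tac x="ou @ u" in exI, rule_tac x=v in exI) simp
  qed
qed

lemma W_fail: "has231 \<pi> \<Longrightarrow> \<not> sorted (west_s \<pi>)"
proof
  assume "has231 \<pi>" and so: "sorted (west_s \<pi>)"
  then obtain p x d A B C D where pi: "\<pi> = A @ p # B @ x # C @ d # D" and lt: "d < p" "p < x"
    unfolding has231_def p3_def by blast
  obtain ou st1 where E: "sc_aux P21 ((A @ [p]) @ (B @ x # C @ d # D)) [] = ou @ sc_aux P21 (B @ x # C @ d # D) st1"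
    "sc_aux P21 (A @ [p]) [] = ou @ st1" using sc_D by blast
  have "p \<in> set ou \<or> p \<in> set st1" using sc_set[of P21 "A @ [p]" "[]"] E(2) by auto
  then obtain u v where uv: "west_s \<pi> = u @ p # v" "d \<in> set v"
  proof
    assume "p \<in> set ou"
    then obtain u1 u2 where "ou = u1 @ p # u2" by (meson split_list)
    moreover have "d \<in> set (sc_aux P21 (B @ x # C @ d # D) st1)" using sc_set by auto
    ultimately show ?thesis using E(1) pi that unfolding west_s_def SC_def
      by (metis (no_types, lifting) Un_iff append.assoc append_Cons append_Nil set_append)
  next
    assume "p \<in> set st1"
    then obtain u v where "sc_aux P21 (B @ x # C @ d # D) st1 = u @ p # v \<and> d \<in> set v"
      using W_b[of p st1 x d "C @ d # D" B] lt by auto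
    then have "sc_aux P21 \<pi> [] = (ou @ u) @ p # v \<and> d \<in> set v" using E(1) pi by simp
    then show ?thesis using that unfolding west_s_def SC_def by blast
  qed
  then show False using so lt by (auto simp: sorted_append)
qed


lemma c321_Cons: "c321 w \<Longrightarrow> c321 (y # w)"
  unfolding c321_def by (metis append_Cons)

lemma c321_append: "c321 w \<Longrightarrow> c321 (A @ w)"
  by (induction A) (auto intro: c321_Cons)

lemma c321_short: "length w < 3 \<Longrightarrow> \<not> c321 w"
  unfolding c321_def by auto

lemma F_key:
  assumes "c321 (x # y # st')" "\<not> c321 (y # st')" "\<not> c321 (x # st')"
  shows "\<exists>d st''. st' = d # st'' \<and> d < y \<and> y < x"
proof -
  obtain u a v b c z where w: "x # y # st' = u @ a # v @ b # c # z" "c < b" "b < a"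
    using assms(1) unfolding c321_def by blast
  show ?thesis
  proof (cases u)
    case Nil
    then have ax: "a = x" and yst: "y # st' = v @ b # c # z" using w by auto
    show ?thesis
    proof (cases v)
      case Nil
      then show ?thesis using yst w ax by auto
    next
      case (Cons v1 v')
      then have "st' = v' @ b # c # z" using yst by simp
      then have "c321 (x # st')" unfolding c321_def using w ax
        by (rule_tac x="[]" in exI, rule_tac x=x in exI, rule_tac x=v' in exI) auto
      then show ?thesis using assms(3) by blast
    qed
  next
    case (Cons u1 u')
    then have "y # st' = u' @ a # v @ b # c # z" using w by simp
    then have "c321 (y # st')" unfolding c321_def using w by blast
    then show ?thesis using assms(2) by blast
  qed
qed

abbreviation P321 :: vpattern where "P321 \<equiv> pat_3_21"

lemma F_lemma: "\<not> c321 st \<Longrightarrow> c321 (x # st) \<Longrightarrow>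
  \<exists>pre p d st''. st = pre @ p # d # st'' \<and> d < p \<and> p < x \<and> \<not> c321 (x # d # st'') \<and>
     sc_aux P321 (x # ys) st = pre @ p # sc_aux P321 (x # ys) (d # st'')"
proof (induction st)
  case Nil
  then show ?case using c321_short[of "[x]"] by simp
next
  case (Cons y st')
  have ns': "\<not> c321 st'" using Cons.prems(1) c321_Cons by blast
  have pop: "sc_aux P321 (x # ys) (y # st') = y # sc_aux P321 (x # ys) st'"
    using Cons.prems(2) avoids321 by (subst sc_aux.simps(2)) (simp del: sc_aux.simps)
  show ?case
  proof (cases "c321 (x # st')")
    case False
    then obtain d st'' where "st' = d # st''" "d < y" "y < x"
      using F_key[OF Cons.prems(2) Cons.prems(1) False] by blast
    then show ?thesis using pop False
      by (rule_tac x="[]" in exI, rule_tac x=y in exI, rule_tac x=d in exI, rule_tac x=st'' in exI) simp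
  next
    case True
    then obtain pre p d st'' where "st' = pre @ p # d # st'' \<and> d < p \<and> p < x \<and> \<not> c321 (x # d # st'') \<and>
     sc_aux P321 (x # ys) st' = pre @ p # sc_aux P321 (x # ys) (d # st'')"
      using Cons.IH ns' by blast
    then show ?thesis using pop
      by (rule_tac x="y # pre" in exI, rule_tac x=p in exI, rule_tac x=d in exI, rule_tac x=st'' in exI) simp
  qed
qed

lemma G_lemma: "\<not> c321 st \<Longrightarrow>
   (\<not> c321 (rev \<tau> @ st) \<and> sc_aux P321 \<tau> st = rev \<tau> @ st) \<or> has231 (sc_aux P321 \<tau> st)"
proof (induction \<tau> arbitrary: st)
  case Nil
  then show ?case by simp
next
  case (Cons x t)
  show ?case
  proof (cases "c321 (x # st)")
    case False
    then have push: "sc_aux P321 (x # t) st = sc_aux P321 t (x # st)"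
      using avoids321 by simp
    show ?thesis using Cons.IH[OF False] push by simp
  next
    case True
    then obtain pre p d st'' where F: "st = pre @ p # d # st''" "d < p" "p < x" "\<not> c321 (x # d # st'')"
      "sc_aux P321 (x # t) st = pre @ p # sc_aux P321 (x # t) (d # st'')"
      using F_lemma[OF Cons.prems] by blast
    have push: "sc_aux P321 (x # t) (d # st'') = sc_aux P321 t (x # d # st'')"
      using F(4) avoids321 by (subst sc_aux.simps(2)) (simp del: sc_aux.simps)
    have "p2 (x # d # st'') x d" unfolding p2_def
      by (rule_tac x="[]" in exI, rule_tac x="[]" in exI, rule_tac x=st'' in exI) simp
    then obtain A B C where "sc_aux P321 t (x # d # st'') = A @ x # B @ d # C"
      using p2_sc unfolding p2_def by blast
    then have "sc_aux P321 (x # t) st = pre @ p # A @ x # B @ d # C" using F(5) push by simp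
    then have "has231 (sc_aux P321 (x # t) st)" unfolding has231_def p3_def using F(2,3)
      by (rule_tac x=p in exI, rule_tac x=x in exI, rule_tac x=d in exI) auto
    then show ?thesis by blast
  qed
qed

lemma N_lemma: "\<not> c321 (rev \<tau> @ st) \<Longrightarrow> sc_aux P321 \<tau> st = rev \<tau> @ st"
proof (induction \<tau> arbitrary: st)
  case Nil
  then show ?case by simp
next
  case (Cons x t)
  have "\<not> c321 (x # st)" using Cons.prems c321_append[of "x # st" "rev t"] by auto
  then have push: "sc_aux P321 (x # t) st = sc_aux P321 t (x # st)"
    using avoids321 by simp
  then show ?case using Cons.IH[of "x # st"] Cons.prems by simp
qed


definition good :: "nat list \<Rightarrow> bool" where
  "good \<tau> \<longleftrightarrow> \<not> (\<exists>a b c. p3 \<tau> a b c \<and> a < b \<and> a < c)"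

lemma p3_rev: "p3 w a b c \<Longrightarrow> p3 (rev w) c b a"
proof -
  assume "p3 w a b c"
  then obtain A B C D where "w = A @ a # B @ b # C @ c # D" unfolding p3_def by blast
  then show ?thesis unfolding p3_def
    by (rule_tac x="rev D" in exI, rule_tac x="rev C" in exI, rule_tac x="rev B" in exI, rule_tac x="rev A" in exI) simp
qed

lemma p3_distinct: "p3 w a b c \<Longrightarrow> distinct w \<Longrightarrow> a \<noteq> b \<and> b \<noteq> c \<and> a \<noteq> c"
  unfolding p3_def by auto

lemma H_lemma: "distinct \<tau> \<Longrightarrow> p3 \<tau> a b c \<Longrightarrow> a < b \<Longrightarrow> b < c \<Longrightarrow>
   \<not> (\<exists>a b c. p3 \<tau> a b c \<and> a < c \<and> c < b) \<Longrightarrow>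
   \<exists>A b' c' B x C. \<tau> = A @ b' # c' # B @ x # C \<and> b' < c' \<and> c' < x"
proof (induction \<tau> arbitrary: a b c)
  case Nil
  then show ?case unfolding p3_def by simp
next
  case (Cons y t)
  have dt: "distinct t" using Cons.prems(1) by simp
  have n132: "\<not> (\<exists>a b c. p3 t a b c \<and> a < c \<and> c < b)"
    using Cons.prems(5) p3_append_left[of t _ _ _ "[y]"] by auto
  have IH: "\<exists>A b' c' B x C. y # t = A @ b' # c' # B @ x # C \<and> b' < c' \<and> c' < x"
    if h1: "p3 t a' b' c'" and h2: "a' < b'" and h3: "b' < c'" for a' b' c'
  proof -
    obtain A b'' c'' B x C where "t = A @ b'' # c'' # B @ x # C \<and> b'' < c'' \<and> c'' < x"
      using Cons.IH[OF dt h1 h2 h3 n132] by blast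
    then show ?thesis by (rule_tac x="y # A" in exI) auto
  qed
  obtain A B C D where w: "y # t = A @ a # B @ b # C @ c # D" using Cons.prems(2) unfolding p3_def by blast
  show ?case
  proof (cases A)
    case (Cons a1 A')
    then have "t = A' @ a # B @ b # C @ c # D" using w by simp
    then have "p3 t a b c" unfolding p3_def by blast
    then show ?thesis using IH Cons.prems by blast
  next
    case Nil
    then have ya: "y = a" and t: "t = B @ b # C @ c # D" using w by auto
    show ?thesis
    proof (cases B)
      case Nil
      then show ?thesis using t ya Cons.prems(3,4)
        by (rule_tac x="[]" in exI, rule_tac x=y in exI, rule_tac x=b in exI, rule_tac x=C in exI,
            rule_tac x=c in exI, rule_tac x=D in exI) simp
    next
      case (Cons z B')
      have tz: "t = z # B' @ b # C @ c # D" using t Cons by simp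
      have "z \<noteq> y" using Cons.prems(1) tz by auto
      have "z \<noteq> c" using dt tz by auto
      show ?thesis
      proof (cases "z < y")
        case True
        have "p3 t z b c" unfolding p3_def using tz
          by (rule_tac x="[]" in exI, rule_tac x=B' in exI, rule_tac x=C in exI, rule_tac x=D in exI) simp
        then show ?thesis using IH True Cons.prems(3,4) ya by auto
      next
        case False
        then have zy: "y < z" using \<open>z \<noteq> y\<close> by simp
        show ?thesis
        proof (cases "z < c")
          case True
          then show ?thesis using tz zy
            by (rule_tac x="[]" in exI, rule_tac x=y in exI, rule_tac x=z in exI, rule_tac x="B' @ b # C" in exI,
              rule_tac x=c in exI, rule_tac x=D in exI) simp
        next
          case False
          then have "c < z" using \<open>z \<noteq> c\<close> by simp
          moreover have "p3 (y # t) y z c" unfolding p3_def using tz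
            by (rule_tac x="[]" in exI, rule_tac x="[]" in exI, rule_tac x="B' @ b # C" in exI, rule_tac x=D in exI) simp
          moreover have "y < c" using ya Cons.prems(3,4) by simp
          ultimately show ?thesis using Cons.prems(5) by blast
        qed
      qed
    qed
  qed
qed

lemma mset_perm_eq: "\<tau> \<in> permutations_of_set {1..n} \<Longrightarrow> mset \<tau> = mset [1..<n+1]"
  by (metis atLeastLessThanSuc_atLeastAtMost distinct_upt permutations_of_setD(1,2) set_eq_iff_mset_eq_distinct set_upt Suc_eq_plus1)

theorem equiv_good:
  assumes tau: "\<tau> \<in> permutations_of_set {1..n}"
  shows "west_s (SC pat_3_21 \<tau>) = [1..<n+1] \<longleftrightarrow> good \<tau>"
proof
  assume g: "good \<tau>"
  have nc: "\<not> c321 (rev \<tau>)"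
  proof
    assume "c321 (rev \<tau>)"
    then obtain u a v b c z where "rev \<tau> = u @ a # v @ b # c # z" "c < b" "b < a" unfolding c321_def by blast
    then have "\<tau> = rev z @ c # [] @ b # rev v @ a # rev u" "c < b" "c < a"
      by (metis rev_rev_ident rev.simps rev_append append_assoc append_Cons append_Nil, simp_all)
    then have "p3 \<tau> c b a" "c < b" "c < a" unfolding p3_def by blast+
    then show False using g unfolding good_def by blast
  qed
  have sc: "SC pat_3_21 \<tau> = rev \<tau>" using N_lemma[of \<tau> "[]"] nc unfolding SC_def by simp
  have "\<not> has231 (rev \<tau>)"
  proof
    assume "has231 (rev \<tau>)"
    then obtain p x d where "p3 (rev \<tau>) p x d" "d < p" "p < x" unfolding has231_def by blast
    then have "p3 \<tau> d x p" "d < x" "d < p" using p3_rev[of "rev \<tau>"] by auto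
    then show False using g unfolding good_def by blast
  qed
  moreover have "distinct (rev \<tau>)" using tau permutations_of_setD by auto
  ultimately have "sorted (west_s (rev \<tau>))" using W_sort by blast
  moreover have "mset (west_s (rev \<tau>)) = mset [1..<n+1]"
    using sc_mset[of P21 "rev \<tau>" "[]"] mset_perm_eq[OF tau] unfolding west_s_def SC_def by simp
  ultimately show "west_s (SC pat_3_21 \<tau>) = [1..<n+1]" using sc
    by (metis properties_for_sort sorted_sort_id sorted_upt)
next
  assume ws: "west_s (SC pat_3_21 \<tau>) = [1..<n+1]"
  then have so: "sorted (west_s (SC pat_3_21 \<tau>))" by (simp del: upt_Suc)
  have dist: "distinct \<tau>" using tau permutations_of_setD by auto
  show "good \<tau>"
  proof (rule ccontr)
    assume ng: "\<not> good \<tau>"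
    have "\<not> c321 []" unfolding c321_def by simp
    from G_lemma[OF this, of \<tau>]
    have cases: "(\<not> c321 (rev \<tau>) \<and> SC pat_3_21 \<tau> = rev \<tau>) \<or> has231 (SC pat_3_21 \<tau>)"
      unfolding SC_def by simp
    then show False
    proof
      assume "has231 (SC pat_3_21 \<tau>)"
      then show False using W_fail so by blast
    next
      assume A: "\<not> c321 (rev \<tau>) \<and> SC pat_3_21 \<tau> = rev \<tau>"
      have n132: "\<not> (\<exists>a b c. p3 \<tau> a b c \<and> a < c \<and> c < b)"
      proof
        assume "\<exists>a b c. p3 \<tau> a b c \<and> a < c \<and> c < b"
        then obtain a b c where "p3 \<tau> a b c" "a < c" "c < b" by blast
        then have "has231 (rev \<tau>)" unfolding has231_def using p3_rev by blast
        then show False using W_fail so A by simp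
      qed
      obtain a b c where abc: "p3 \<tau> a b c" "a < b" "a < c" using ng unfolding good_def by blast
      have "b \<noteq> c" using p3_distinct[OF abc(1) dist] by simp
      then have "b < c" using n132 abc by (meson linorder_neqE_nat)
      then obtain A b' c' B x C where "\<tau> = A @ b' # c' # B @ x # C" "b' < c'" "c' < x"
        using H_lemma[OF dist abc(1,2) _ n132] by blast
      then have "rev \<tau> = rev C @ x # rev B @ c' # b' # rev A" "b' < c'" "c' < x" by simp_all
      then have "c321 (rev \<tau>)" unfolding c321_def by blast
      then show False using A by blast
    qed
  qed
qed


lemma p3_Cons: "p3 (x # t) a b c \<longleftrightarrow> (a = x \<and> p2 t b c) \<or> p3 t a b c"
proof
  assume "p3 (x # t) a b c"
  then obtain A B C D where w: "x # t = A @ a # B @ b # C @ c # D" unfolding p3_def by blast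
  show "(a = x \<and> p2 t b c) \<or> p3 t a b c"
  proof (cases A)
    case Nil
    then show ?thesis using w unfolding p2_def by auto
  next
    case (Cons a1 A')
    then show ?thesis using w unfolding p3_def by auto
  qed
next
  assume "(a = x \<and> p2 t b c) \<or> p3 t a b c"
  then show "p3 (x # t) a b c"
  proof
    assume "a = x \<and> p2 t b c"
    then obtain B C D where "t = B @ b # C @ c # D" "a = x" unfolding p2_def by blast
    then show ?thesis unfolding p3_def by (rule_tac x="[]" in exI) auto
  next
    assume "p3 t a b c"
    then show ?thesis using p3_append_left[of t a b c "[x]"] by simp
  qed
qed

lemma good_Cons: "good (x # t) \<longleftrightarrow> good t \<and> \<not> (\<exists>b c. p2 t b c \<and> x < b \<and> x < c)"
  unfolding good_def p3_Cons by blast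

lemma p2_order: "a \<in> set t \<Longrightarrow> b \<in> set t \<Longrightarrow> a \<noteq> b \<Longrightarrow> p2 t a b \<or> p2 t b a"
proof -
  assume a: "a \<in> set t" and b: "b \<in> set t" and ne: "a \<noteq> b"
  obtain L R where t: "t = L @ a # R" using a by (meson split_list)
  then have "b \<in> set L \<or> b \<in> set R" using b ne by auto
  then show ?thesis
  proof
    assume "b \<in> set L"
    then obtain L1 L2 where "L = L1 @ b # L2" by (meson split_list)
    then have "p2 t b a" unfolding p2_def using t by auto
    then show ?thesis by blast
  next
    assume "b \<in> set R"
    then obtain R1 R2 where "R = R1 @ b # R2" by (meson split_list)
    then have "p2 t a b" unfolding p2_def using t by auto
    then show ?thesis by blast
  qed
qed

lemma p2_distinct: "p2 t a b \<Longrightarrow> distinct t \<Longrightarrow> a \<noteq> b"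
  unfolding p2_def by auto

lemma p2_set: "p2 t a b \<Longrightarrow> a \<in> set t \<and> b \<in> set t"
  unfolding p2_def by auto

definition goodset :: "nat set \<Rightarrow> nat list set" where
  "goodset A = {\<tau> \<in> permutations_of_set A. good \<tau>}"

lemma perm_Cons: "x # t \<in> permutations_of_set A \<longleftrightarrow> x \<in> A \<and> t \<in> permutations_of_set (A - {x})"
  unfolding permutations_of_set_def by auto

lemma count_good: "finite A \<Longrightarrow> card A = Suc m \<Longrightarrow> card (goodset A) = 2 ^ m"
proof (induction m arbitrary: A)
  case 0
  then obtain a where A: "A = {a}" using card_1_singletonE by auto
  have "good [a]" unfolding good_def p3_def by auto
  then have "goodset A = {[a]}" unfolding goodset_def A by auto
  then show ?case by simp
next
  case (Suc m)
  define M where "M = Max A"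
  define A' where "A' = A - {M}"
  define M2 where "M2 = Max A'"
  define A'' where "A'' = A - {M2}"
  have Ane: "A \<noteq> {}" using Suc.prems by auto
  have MA: "M \<in> A" using M_def Ane Suc.prems(1) by simp
  have cA': "card A' = Suc m" using A'_def MA Suc.prems by simp
  have fA': "finite A'" using A'_def Suc.prems(1) by simp
  have A'ne: "A' \<noteq> {}" using cA' by auto
  have M2A': "M2 \<in> A'" using M2_def A'ne fA' by simp
  have M2A: "M2 \<in> A" and M2M: "M2 \<noteq> M" using M2A' A'_def by auto
  have M2le: "M2 < M" using M2A M2M M_def Suc.prems(1) by (meson Max_ge order_le_neq_trans)
  have cA'': "card A'' = Suc m" using A''_def M2A Suc.prems by simp
  have fA'': "finite A''" using A''_def Suc.prems(1) by simp
  have bigM: "y = M" if "y \<in> A" "M2 < y" for y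
  proof (rule ccontr)
    assume "y \<noteq> M"
    then have "y \<in> A'" using that A'_def by auto
    then have "y \<le> M2" using M2_def fA' by simp
    then show False using that by simp
  qed
  have eq: "goodset A = (#) M ` goodset A' \<union> (#) M2 ` goodset A''"
  proof (intro equalityI subsetI)
    fix \<tau> assume "\<tau> \<in> goodset A"
    then have tp: "\<tau> \<in> permutations_of_set A" and tg: "good \<tau>" unfolding goodset_def by auto
    then have "\<tau> \<noteq> []" using Ane permutations_of_setD(1) by fastforce
    then obtain x t where tau: "\<tau> = x # t" by (cases \<tau>) auto
    have xA: "x \<in> A" and tp': "t \<in> permutations_of_set (A - {x})" using tp unfolding tau perm_Cons by auto
    have gt: "good t" and ng: "\<not> (\<exists>b c. p2 t b c \<and> x < b \<and> x < c)" using tg tau good_Cons by auto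
    have "x = M \<or> x = M2"
    proof (rule ccontr)
      assume nx: "\<not> (x = M \<or> x = M2)"
      then have "x \<in> A'" using xA A'_def by auto
      then have "x \<le> M2" using M2_def fA' by simp
      then have xM2: "x < M2" using nx by simp
      then have xM: "x < M" using M2le by simp
      have "M \<in> set t" "M2 \<in> set t" using tp' permutations_of_setD(1) MA M2A nx by auto
      then have "p2 t M M2 \<or> p2 t M2 M" using p2_order M2M by metis
      then show False using ng xM xM2 by blast
    qed
    then show "\<tau> \<in> (#) M ` goodset A' \<union> (#) M2 ` goodset A''"
      using tau tp' gt A'_def A''_def unfolding goodset_def by auto
  next
    fix \<tau> assume "\<tau> \<in> (#) M ` goodset A' \<union> (#) M2 ` goodset A''"
    then show "\<tau> \<in> goodset A"
    proof
      assume "\<tau> \<in> (#) M ` goodset A'"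
      then obtain t where tau: "\<tau> = M # t" and t: "t \<in> permutations_of_set A'" "good t"
        unfolding goodset_def by auto
      have "\<not> (\<exists>b c. p2 t b c \<and> M < b \<and> M < c)"
      proof
        assume "\<exists>b c. p2 t b c \<and> M < b \<and> M < c"
        then obtain b c where "p2 t b c" "M < b" by blast
        then have "b \<in> A" using p2_set t(1) permutations_of_setD(1) A'_def by blast
        then have "b \<le> M" using M_def Suc.prems(1) by simp
        then show False using \<open>M < b\<close> by simp
      qed
      then show "\<tau> \<in> goodset A" using t MA A'_def unfolding goodset_def tau by (auto simp: perm_Cons good_Cons)
    next
      assume "\<tau> \<in> (#) M2 ` goodset A''"
      then obtain t where tau: "\<tau> = M2 # t" and t: "t \<in> permutations_of_set A''" "good t"
        unfolding goodset_def by auto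
      have "\<not> (\<exists>b c. p2 t b c \<and> M2 < b \<and> M2 < c)"
      proof
        assume "\<exists>b c. p2 t b c \<and> M2 < b \<and> M2 < c"
        then obtain b c where bc: "p2 t b c" "M2 < b" "M2 < c" by blast
        then have "b \<in> A" "c \<in> A" using p2_set t(1) permutations_of_setD(1) A''_def by blast+
        then have "b = M" "c = M" using bigM bc by auto
        moreover have "b \<noteq> c" using p2_distinct bc(1) t(1) permutations_of_setD(2) by blast
        ultimately show False by simp
      qed
      then show "\<tau> \<in> goodset A" using t M2A A''_def unfolding goodset_def tau by (auto simp: perm_Cons good_Cons)
    qed
  qed
  have fin1: "finite (goodset A')" using fA' unfolding goodset_def by simp
  have fin2: "finite (goodset A'')" using fA'' unfolding goodset_def by simp
  have disj: "(#) M ` goodset A' \<inter> (#) M2 ` goodset A'' = {}" using M2M by auto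
  have "card (goodset A) = card ((#) M ` goodset A') + card ((#) M2 ` goodset A'')"
    using eq card_Un_disjoint[OF finite_imageI[OF fin1] finite_imageI[OF fin2] disj] by simp
  also have "\<dots> = card (goodset A') + card (goodset A'')"
    by (simp add: card_image)
  also have "\<dots> = 2 ^ m + 2 ^ m" using Suc.IH[OF fA' cA'] Suc.IH[OF fA'' cA''] by simp
  finally show ?case by simp
qed

theorem mainTheorem8:
  fixes n :: nat
  assumes "n \<ge> 1"
  shows "card (Sort_n n pat_3_21) = 2 ^ (n - 1)"
proof -
  have "Sort_n n pat_3_21 = goodset {1..n}"
    unfolding Sort_n_def goodset_def using equiv_good by blast
  moreover have "card {1..n} = Suc (n - 1)" using assms by simp
  ultimately show ?thesis using count_good[of "{1..n}" "n - 1"] by simp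
qed

end
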